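(* Let $X$ be a Polish space and let $c:X\times X\to[0,\infty)$ be a continuous bounded function with $c(x,y)=c(y,x)$ for all $x,y\in X$. For $Q\in\mathcal M(X)$ define $K(Q):=\int_{X\times X}c(x,y)\,dQ(x)\,dQ(y)$. Then: (i) $c$ is positive definite if and only if $K$ is convex on $\mathcal M(X)$; (ii) $c$ is balanced positive definite if and only if $K$ is convex on $\mathcal P(X)$.
   Context: $\mathcal M(X)$ denotes the set of finite (nonnegative) Borel measures on $X$ and $\mathcal P(X)$ the set of Borel probability measures on $X$. A symmetric function $c:X\times X\to[0,\infty)$ is positive definite if for all $n$, all distinct points $x_1,\ldots,x_n\in X$ and all real numbers $a_1,\ldots,a_n$ one has $\sum_{i,j=1}^n c(x_i,x_j)a_ia_j\ge 0$. It is balanced positive definite if for all $n$, all distinct $x_1,\ldots,x_n\in X$ and all real $a_1,\ldots,a_n$ with $\sum_{i=1}^n a_i=0$ one has $\sum_{i,j=1}^n c(x_i,x_j)a_ia_j\ge0$. *)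

theory Defs
  imports "HOL-Probability.Probability"
begin

definition finite_borel_measures :: "'a::topological_space measure set" where
  "finite_borel_measures = {Q. sets Q = sets borel \<and> finite_measure Q}"

definition borel_prob_measures :: "'a::topological_space measure set" where
  "borel_prob_measures = {Q. sets Q = sets borel \<and> prob_space Q}"

definition mix_measure :: "real \<Rightarrow> 'a::topological_space measure \<Rightarrow> 'a measure \<Rightarrow> 'a measure" where
  "mix_measure t Q1 Q2 = measure_of UNIV (sets borel)
     (\<lambda>A. ennreal t * emeasure Q1 A + ennreal (1 - t) * emeasure Q2 A)"

definition energyK :: "('a::topological_space \<Rightarrow> 'a \<Rightarrow> real) \<Rightarrow> 'a measure \<Rightarrow> real" where
  "energyK c Q = integral\<^sup>L (Q \<Otimes>\<^sub>M Q) (\<lambda>(x, y). c x y)"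

definition convex_on_measures :: "'a::topological_space measure set \<Rightarrow> ('a measure \<Rightarrow> real) \<Rightarrow> bool" where
  "convex_on_measures S F \<longleftrightarrow>
     (\<forall>Q1\<in>S. \<forall>Q2\<in>S. \<forall>t::real. 0 \<le> t \<and> t \<le> 1 \<longrightarrow>
        F (mix_measure t Q1 Q2) \<le> t * F Q1 + (1 - t) * F Q2)"

definition pos_def_kernel :: "('a \<Rightarrow> 'a \<Rightarrow> real) \<Rightarrow> bool" where
  "pos_def_kernel c \<longleftrightarrow>
     (\<forall>(xs::'a list) (a::nat \<Rightarrow> real). distinct xs \<longrightarrow>
        (\<Sum>i<length xs. \<Sum>j<length xs. c (xs ! i) (xs ! j) * a i * a j) \<ge> 0)"

definition balanced_pos_def_kernel :: "('a \<Rightarrow> 'a \<Rightarrow> real) \<Rightarrow> bool" where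
  "balanced_pos_def_kernel c \<longleftrightarrow>
     (\<forall>(xs::'a list) (a::nat \<Rightarrow> real). distinct xs \<longrightarrow> (\<Sum>i<length xs. a i) = 0 \<longrightarrow>
        (\<Sum>i<length xs. \<Sum>j<length xs. c (xs ! i) (xs ! j) * a i * a j) \<ge> 0)"

end

theory Submission
  imports Defs
begin


definition wmeas :: "'i set \<Rightarrow> ('i \<Rightarrow> real) \<Rightarrow> ('i \<Rightarrow> 'a::topological_space measure) \<Rightarrow> 'a measure" where
 "wmeas I w M = measure_of UNIV (sets borel) (\<lambda>A. \<Sum>i\<in>I. ennreal (w i) * emeasure (M i) A)"

lemma sets_wmeas[simp, measurable_cong]: "sets (wmeas I w M) = sets borel"
  using sets.sigma_sets_eq[of borel] by (simp add: wmeas_def)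

lemma space_wmeas[simp]: "space (wmeas I w M) = UNIV"
  by (simp add: wmeas_def)

lemma emeasure_wmeas:
  fixes M :: "'i \<Rightarrow> 'a::topological_space measure"
  assumes M: "\<And>i. i \<in> I \<Longrightarrow> sets (M i) = sets borel" and A: "A \<in> sets borel"
  shows "emeasure (wmeas I w M) A = (\<Sum>i\<in>I. ennreal (w i) * emeasure (M i) A)"
  unfolding wmeas_def
proof (rule emeasure_measure_of_sigma)
  show "sigma_algebra UNIV (sets borel)"
    by (metis sets.sigma_algebra_axioms space_borel)
  show "positive (sets borel) (\<lambda>A. \<Sum>i\<in>I. ennreal (w i) * emeasure (M i) A)"
    by (simp add: positive_def)
  show "countably_additive (sets borel) (\<lambda>A. \<Sum>i\<in>I. ennreal (w i) * emeasure (M i) A)"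
  proof (rule countably_additiveI)
    fix A :: "nat \<Rightarrow> 'a set" assume *: "range A \<subseteq> sets borel" "disjoint_family A"
    have "(\<Sum>k. \<Sum>i\<in>I. ennreal (w i) * emeasure (M i) (A k)) = (\<Sum>i\<in>I. \<Sum>k. ennreal (w i) * emeasure (M i) (A k))"
      by (rule suminf_sum) simp
    also have "\<dots> = (\<Sum>i\<in>I. ennreal (w i) * (\<Sum>k. emeasure (M i) (A k)))"
      by simp
    also have "\<dots> = (\<Sum>i\<in>I. ennreal (w i) * emeasure (M i) (\<Union>k. A k))"
      using * M by (intro sum.cong refl) (simp add: suminf_emeasure)
    finally show "(\<Sum>k. \<Sum>i\<in>I. ennreal (w i) * emeasure (M i) (A k)) = (\<Sum>i\<in>I. ennreal (w i) * emeasure (M i) (\<Union>k. A k))" .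
  qed
qed (fact A)

lemma meas_borel_cong:
  assumes "sets N = sets borel" "f \<in> borel_measurable borel"
  shows "f \<in> borel_measurable N"
  using assms measurable_cong_sets[of N borel borel borel] by blast

lemma nn_integral_wmeas:
  fixes M :: "'i \<Rightarrow> 'a::topological_space measure"
  assumes M: "\<And>i. i \<in> I \<Longrightarrow> sets (M i) = sets borel" and fin: "finite I"
    and f: "f \<in> borel_measurable borel"
  shows "(\<integral>\<^sup>+x. f x \<partial>wmeas I w M) = (\<Sum>i\<in>I. ennreal (w i) * (\<integral>\<^sup>+x. f x \<partial>M i))"
  using f
proof induction
  case (cong f g)
  have fg: "f = g" using cong.hyps(3) by (intro ext) simp
  show ?case using cong.IH unfolding fg .
next
  case (set A)
  then show ?case using M by (simp add: emeasure_wmeas)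
next
  case (mult f c)
  have W: "sets (wmeas I w M) = sets borel" by simp
  have "(\<integral>\<^sup>+x. c * f x \<partial>wmeas I w M) = c * (\<integral>\<^sup>+x. f x \<partial>wmeas I w M)"
    by (rule nn_integral_cmult[OF meas_borel_cong[OF W mult.hyps(2)]])
  moreover have "\<And>i. i \<in> I \<Longrightarrow> (\<integral>\<^sup>+x. c * f x \<partial>M i) = c * (\<integral>\<^sup>+x. f x \<partial>M i)"
    by (rule nn_integral_cmult[OF meas_borel_cong[OF M mult.hyps(2)]])
  ultimately show ?case using mult.IH
    by (simp add: sum_distrib_left mult.left_commute cong: sum.cong)
next
  case (add g f)
  have W: "sets (wmeas I w M) = sets borel" by simp
  have "(\<integral>\<^sup>+x. f x + g x \<partial>wmeas I w M) = (\<integral>\<^sup>+x. f x \<partial>wmeas I w M) + (\<integral>\<^sup>+x. g x \<partial>wmeas I w M)"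
    by (rule nn_integral_add[OF meas_borel_cong[OF W add.hyps(3)] meas_borel_cong[OF W add.hyps(1)]])
  moreover have "\<And>i. i \<in> I \<Longrightarrow> (\<integral>\<^sup>+x. f x + g x \<partial>M i) = (\<integral>\<^sup>+x. f x \<partial>M i) + (\<integral>\<^sup>+x. g x \<partial>M i)"
    by (rule nn_integral_add[OF meas_borel_cong[OF M add.hyps(3)] meas_borel_cong[OF M add.hyps(1)]])
  ultimately show ?case using add.IH
    by (simp add: sum.distrib distrib_left cong: sum.cong)
next
  case (seq U)
  have W: "sets (wmeas I w M) = sets borel" by simp
  have "(\<integral>\<^sup>+x. (SUP k. U k) x \<partial>wmeas I w M) = (SUP k. \<integral>\<^sup>+x. U k x \<partial>wmeas I w M)"
    unfolding SUP_apply by (rule nn_integral_monotone_convergence_SUP[OF seq.hyps(3) meas_borel_cong[OF W seq.hyps(1)]])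
  also have "\<dots> = (SUP k. \<Sum>i\<in>I. ennreal (w i) * (\<integral>\<^sup>+x. U k x \<partial>M i))"
    using seq.IH by simp
  also have "\<dots> = (\<Sum>i\<in>I. SUP k. ennreal (w i) * (\<integral>\<^sup>+x. U k x \<partial>M i))"
  proof (rule ennreal_SUP_sum)
    fix i assume "i \<in> I"
    show "incseq (\<lambda>k. ennreal (w i) * (\<integral>\<^sup>+x. U k x \<partial>M i))"
      using seq.hyps(3) unfolding incseq_def le_fun_def by (intro allI impI mult_left_mono nn_integral_mono) simp_all
  qed
  also have "\<dots> = (\<Sum>i\<in>I. ennreal (w i) * (\<integral>\<^sup>+x. (SUP k. U k) x \<partial>M i))"
  proof (intro sum.cong refl)
    fix i assume i: "i \<in> I"
    have "(\<integral>\<^sup>+x. (SUP k. U k) x \<partial>M i) = (SUP k. \<integral>\<^sup>+x. U k x \<partial>M i)"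
      unfolding SUP_apply by (rule nn_integral_monotone_convergence_SUP[OF seq.hyps(3) meas_borel_cong[OF M[OF i] seq.hyps(1)]])
    then show "(SUP k. ennreal (w i) * (\<integral>\<^sup>+x. U k x \<partial>M i)) = ennreal (w i) * (\<integral>\<^sup>+x. (SUP k. U k) x \<partial>M i)"
      by (simp add: SUP_mult_left_ennreal)
  qed
  finally show ?case .
qed

lemma integrable_bdd:
  fixes f :: "'a \<Rightarrow> real"
  assumes "finite_measure N" "f \<in> borel_measurable N" "\<And>x. \<bar>f x\<bar> \<le> B"
  shows "integrable N f"
  using assms by (intro finite_measure.integrable_const_bound[where B=B]) auto

lemma finite_measure_wmeas:
  fixes M :: "'i \<Rightarrow> 'a::topological_space measure"
  assumes M: "\<And>i. i \<in> I \<Longrightarrow> sets (M i) = sets borel" "\<And>i. i \<in> I \<Longrightarrow> finite_measure (M i)"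
    and fin: "finite I"
  shows "finite_measure (wmeas I w M)"
proof (rule finite_measureI)
  have "\<And>i. i \<in> I \<Longrightarrow> emeasure (M i) UNIV \<noteq> top"
    by (rule finite_measure.emeasure_finite) (erule M(2))
  then show "emeasure (wmeas I w M) (space (wmeas I w M)) \<noteq> \<infinity>"
    using M(1) fin by (simp add: emeasure_wmeas ennreal_mult_eq_top_iff)
qed

lemma integral_wmeas_nonneg:
  fixes M :: "'i \<Rightarrow> 'a::topological_space measure" and f :: "'a \<Rightarrow> real"
  assumes M: "\<And>i. i \<in> I \<Longrightarrow> sets (M i) = sets borel" "\<And>i. i \<in> I \<Longrightarrow> finite_measure (M i)"
    and fin: "finite I" and w: "\<And>i. i \<in> I \<Longrightarrow> 0 \<le> w i"
    and f: "f \<in> borel_measurable borel" and bnd: "\<And>x. \<bar>f x\<bar> \<le> B" and nn: "\<And>x. 0 \<le> f x"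
  shows "integral\<^sup>L (wmeas I w M) f = (\<Sum>i\<in>I. w i * integral\<^sup>L (M i) f)"
proof -
  have W: "sets (wmeas I w M) = sets borel" by simp
  have "integral\<^sup>L (wmeas I w M) f = enn2real (\<integral>\<^sup>+x. ennreal (f x) \<partial>wmeas I w M)"
    using nn meas_borel_cong[OF W f] by (intro integral_eq_nn_integral) auto
  also have "\<dots> = enn2real (\<Sum>i\<in>I. ennreal (w i) * (\<integral>\<^sup>+x. ennreal (f x) \<partial>M i))"
    using nn_integral_wmeas[OF M(1) fin, where f="\<lambda>x. ennreal (f x)" and w=w] f by simp
  also have "\<dots> = enn2real (\<Sum>i\<in>I. ennreal (w i) * ennreal (integral\<^sup>L (M i) f))"
  proof -
    have "\<And>i. i \<in> I \<Longrightarrow> (\<integral>\<^sup>+x. ennreal (f x) \<partial>M i) = ennreal (integral\<^sup>L (M i) f)"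
      using M nn meas_borel_cong[OF M(1) f] integrable_bdd[OF M(2) meas_borel_cong[OF M(1) f] bnd]
      by (intro nn_integral_eq_integral) auto
    then show ?thesis by simp
  qed
  also have "\<dots> = enn2real (ennreal (\<Sum>i\<in>I. w i * integral\<^sup>L (M i) f))"
  proof -
    have "\<And>i. i \<in> I \<Longrightarrow> 0 \<le> integral\<^sup>L (M i) f" using nn by (intro Bochner_Integration.integral_nonneg) auto
    then have "(\<Sum>i\<in>I. ennreal (w i) * ennreal (integral\<^sup>L (M i) f)) = ennreal (\<Sum>i\<in>I. w i * integral\<^sup>L (M i) f)"
    proof -
      have "(\<Sum>i\<in>I. ennreal (w i) * ennreal (integral\<^sup>L (M i) f)) = (\<Sum>i\<in>I. ennreal (w i * integral\<^sup>L (M i) f))"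
        using w by (intro sum.cong refl) (simp add: ennreal_mult')
      also have "\<dots> = ennreal (\<Sum>i\<in>I. w i * integral\<^sup>L (M i) f)"
        using w \<open>\<And>i. i \<in> I \<Longrightarrow> 0 \<le> integral\<^sup>L (M i) f\<close> by (intro sum_ennreal) simp
      finally show ?thesis .
    qed
    then show ?thesis by simp
  qed
  also have "\<dots> = (\<Sum>i\<in>I. w i * integral\<^sup>L (M i) f)"
  proof -
    have "\<And>i. i \<in> I \<Longrightarrow> 0 \<le> integral\<^sup>L (M i) f" using nn by (intro Bochner_Integration.integral_nonneg) auto
    then show ?thesis using w by (intro enn2real_ennreal sum_nonneg) auto
  qed
  finally show ?thesis .
qed

lemma integral_wmeas:
  fixes M :: "'i \<Rightarrow> 'a::topological_space measure" and f :: "'a \<Rightarrow> real"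
  assumes M: "\<And>i. i \<in> I \<Longrightarrow> sets (M i) = sets borel" "\<And>i. i \<in> I \<Longrightarrow> finite_measure (M i)"
    and fin: "finite I" and w: "\<And>i. i \<in> I \<Longrightarrow> 0 \<le> w i"
    and f: "f \<in> borel_measurable borel" and bnd: "\<And>x. \<bar>f x\<bar> \<le> B"
  shows "integral\<^sup>L (wmeas I w M) f = (\<Sum>i\<in>I. w i * integral\<^sup>L (M i) f)"
proof -
  let ?p = "\<lambda>x. max 0 (f x)" and ?n = "\<lambda>x. max 0 (- f x)"
  have fe: "f = (\<lambda>x. ?p x - ?n x)" by (auto simp: max_def)
  have pm: "?p \<in> borel_measurable borel" "?n \<in> borel_measurable borel" using f by auto
  have pb: "\<And>x. \<bar>?p x\<bar> \<le> B" "\<And>x. \<bar>?n x\<bar> \<le> B" using bnd by (auto simp: abs_le_iff max_def, smt (verit) bnd, smt (verit) bnd)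
  have pn: "\<And>x. 0 \<le> ?p x" "\<And>x. 0 \<le> ?n x" by auto
  have W: "sets (wmeas I w M) = sets borel" by simp
  have FW: "finite_measure (wmeas I w M)" by (rule finite_measure_wmeas[OF M fin])
  have iW: "integrable (wmeas I w M) ?p" "integrable (wmeas I w M) ?n"
    by (rule integrable_bdd[OF FW meas_borel_cong[OF W pm(1)] pb(1)])
       (rule integrable_bdd[OF FW meas_borel_cong[OF W pm(2)] pb(2)])
  have "integral\<^sup>L (wmeas I w M) f = integral\<^sup>L (wmeas I w M) (\<lambda>x. ?p x - ?n x)"
    using fe by simp
  also have "\<dots> = integral\<^sup>L (wmeas I w M) ?p - integral\<^sup>L (wmeas I w M) ?n"
    by (rule Bochner_Integration.integral_diff[OF iW])
  also have "\<dots> = (\<Sum>i\<in>I. w i * integral\<^sup>L (M i) ?p) - (\<Sum>i\<in>I. w i * integral\<^sup>L (M i) ?n)"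
    by (simp only: integral_wmeas_nonneg[OF M fin w pm(1) pb(1) pn(1)] integral_wmeas_nonneg[OF M fin w pm(2) pb(2) pn(2)])
  also have "\<dots> = (\<Sum>i\<in>I. w i * integral\<^sup>L (M i) f)"
  proof -
    have "\<And>i. i \<in> I \<Longrightarrow> integral\<^sup>L (M i) f = integral\<^sup>L (M i) ?p - integral\<^sup>L (M i) ?n"
    proof -
      fix i assume i: "i \<in> I"
      have "integral\<^sup>L (M i) f = integral\<^sup>L (M i) (\<lambda>x. ?p x - ?n x)" using fe by simp
      also have "\<dots> = integral\<^sup>L (M i) ?p - integral\<^sup>L (M i) ?n"
        by (rule Bochner_Integration.integral_diff[OF integrable_bdd[OF M(2)[OF i] meas_borel_cong[OF M(1)[OF i] pm(1)] pb(1)]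
               integrable_bdd[OF M(2)[OF i] meas_borel_cong[OF M(1)[OF i] pm(2)] pb(2)]])
      finally show "integral\<^sup>L (M i) f = integral\<^sup>L (M i) ?p - integral\<^sup>L (M i) ?n" .
    qed
    then show ?thesis by (simp add: sum_subtractf[symmetric] right_diff_distrib)
  qed
  finally show ?thesis .
qed



locale kern =
  fixes c :: "'a::topological_space \<Rightarrow> 'a \<Rightarrow> real" and B :: real
  assumes cmeas: "(\<lambda>(x,y). c x y) \<in> borel_measurable (borel \<Otimes>\<^sub>M borel)"
    and cbnd: "\<And>x y. \<bar>c x y\<bar> \<le> B"
    and csym: "\<And>x y. c x y = c y x"
begin

definition I2 :: "'a measure \<Rightarrow> 'a measure \<Rightarrow> real" where
  "I2 R S = (\<integral>x. (\<integral>y. c x y \<partial>S) \<partial>R)"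

lemma cbnd2: "\<And>z. \<bar>(\<lambda>(x,y). c x y) z\<bar> \<le> B"
  by (auto simp: cbnd split: prod.splits)

lemma cmeas_RS:
  assumes "sets R = sets borel" "sets S = sets borel"
  shows "(\<lambda>(x,y). c x y) \<in> borel_measurable (R \<Otimes>\<^sub>M S)"
  using cmeas measurable_cong_sets[OF sets_pair_measure_cong[OF assms] refl] by blast

lemma c_meas2: "(\<lambda>y. c x y) \<in> borel_measurable borel"
proof -
  have "Pair x \<in> measurable borel (borel \<Otimes>\<^sub>M borel)" by (rule measurable_Pair1') simp
  from measurable_compose[OF this cmeas]
  have "(\<lambda>y. (\<lambda>(x,y). c x y) (x, y)) \<in> borel_measurable borel" .
  then show ?thesis by simp
qed

lemma inner_meas:
  assumes R: "sets R = sets borel" and S: "sets S = sets borel" "finite_measure S"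
  shows "(\<lambda>x. \<integral>y. c x y \<partial>S) \<in> borel_measurable R"
proof -
  interpret S: finite_measure S by fact
  have "(\<lambda>x. \<integral>y. c x y \<partial>S) \<in> borel_measurable borel"
    by (rule S.borel_measurable_lebesgue_integral) (rule cmeas_RS[OF refl S(1)])
  then show ?thesis using meas_borel_cong[OF R] by blast
qed

lemma inner_bnd:
  assumes S: "sets S = sets borel" "finite_measure S"
  shows "\<bar>\<integral>y. c x y \<partial>S\<bar> \<le> B * measure S UNIV"
proof -
  interpret S: finite_measure S by fact
  have sp: "space S = UNIV" using sets_eq_imp_space_eq[OF S(1)] by simp
  have int: "integrable S (\<lambda>y. c x y)"
    by (rule integrable_bdd[OF S(2) meas_borel_cong[OF S(1) c_meas2] cbnd])
  have "\<bar>\<integral>y. c x y \<partial>S\<bar> \<le> (\<integral>y. \<bar>c x y\<bar> \<partial>S)"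
    using integral_norm_bound[of S "\<lambda>y. c x y"] by simp
  also have "\<dots> \<le> (\<integral>y. B \<partial>S)"
    using int cbnd by (intro integral_mono) auto
  also have "\<dots> = B * measure S UNIV" using sp by simp
  finally show ?thesis .
qed

lemma K_eq:
  assumes R: "sets R = sets borel" "finite_measure R"
  shows "energyK c R = I2 R R"
proof -
  interpret R: finite_measure R by fact
  interpret RR: pair_sigma_finite R R ..
  have "integrable (R \<Otimes>\<^sub>M R) (\<lambda>(x,y). c x y)"
    by (rule integrable_bdd[OF finite_measure_pair_measure[OF R(2) R(2)] cmeas_RS[OF R(1) R(1)] cbnd2])
  then show ?thesis unfolding energyK_def I2_def by (rule RR.integral_fst[symmetric])
qed

lemma I2_swap:
  assumes R: "sets R = sets borel" "finite_measure R" and S: "sets S = sets borel" "finite_measure S"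
  shows "I2 R S = I2 S R"
proof -
  interpret R: finite_measure R by fact
  interpret S: finite_measure S by fact
  interpret RS: pair_sigma_finite R S ..
  have "integrable (R \<Otimes>\<^sub>M S) (\<lambda>(x,y). c x y)"
    by (rule integrable_bdd[OF finite_measure_pair_measure[OF S(2) R(2)] cmeas_RS[OF R(1) S(1)] cbnd2])
  from RS.Fubini_integral[OF this] show ?thesis unfolding I2_def by (simp add: csym)
qed

lemma I2_wmeas_left:
  fixes M :: "'i \<Rightarrow> 'a measure"
  assumes M: "\<And>i. i \<in> I \<Longrightarrow> sets (M i) = sets borel" "\<And>i. i \<in> I \<Longrightarrow> finite_measure (M i)"
    and fin: "finite I" and w: "\<And>i. i \<in> I \<Longrightarrow> 0 \<le> w i"
    and S: "sets S = sets borel" "finite_measure S"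
  shows "I2 (wmeas I w M) S = (\<Sum>i\<in>I. w i * I2 (M i) S)"
  unfolding I2_def
  by (rule integral_wmeas[OF M fin w inner_meas[OF refl S] inner_bnd[OF S]])

lemma I2_wmeas_right:
  fixes M :: "'i \<Rightarrow> 'a measure"
  assumes M: "\<And>i. i \<in> I \<Longrightarrow> sets (M i) = sets borel" "\<And>i. i \<in> I \<Longrightarrow> finite_measure (M i)"
    and fin: "finite I" and w: "\<And>i. i \<in> I \<Longrightarrow> 0 \<le> w i"
    and R: "sets R = sets borel" "finite_measure R"
  shows "I2 R (wmeas I w M) = (\<Sum>i\<in>I. w i * I2 R (M i))"
proof -
  have "I2 R (wmeas I w M) = (\<integral>x. (\<Sum>i\<in>I. w i * (\<integral>y. c x y \<partial>M i)) \<partial>R)"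
    unfolding I2_def using integral_wmeas[OF M fin w c_meas2 cbnd] by simp
  also have "\<dots> = (\<Sum>i\<in>I. (\<integral>x. w i * (\<integral>y. c x y \<partial>M i) \<partial>R))"
    by (rule Bochner_Integration.integral_sum)
       (intro Bochner_Integration.integrable_mult_right integrable_bdd[OF R(2) inner_meas[OF R(1) M(1,2)] inner_bnd[OF M(1,2)]]; simp)
  also have "\<dots> = (\<Sum>i\<in>I. w i * I2 R (M i))"
    unfolding I2_def by simp
  finally show ?thesis .
qed

lemma mix_eq:
  "mix_measure t P Q = wmeas {True, False} (\<lambda>b. if b then t else 1 - t) (\<lambda>b. if b then P else Q)"
  unfolding mix_measure_def wmeas_def by simp

lemma K_mix:
  assumes P: "sets P = sets borel" "finite_measure P" and Q: "sets Q = sets borel" "finite_measure Q"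
    and t: "0 \<le> t" "t \<le> 1"
  shows "energyK c (mix_measure t P Q) = t*t*I2 P P + t*(1-t)*(I2 P Q + I2 Q P) + (1-t)*(1-t)*I2 Q Q"
proof -
  let ?w = "\<lambda>b. if b then t else 1 - t" and ?M = "\<lambda>b. if b then P else Q"
  have M: "\<And>b. b \<in> {True, False} \<Longrightarrow> sets (?M b) = sets borel" "\<And>b. b \<in> {True, False} \<Longrightarrow> finite_measure (?M b)"
    using P Q by auto
  have w: "\<And>b. b \<in> {True, False} \<Longrightarrow> 0 \<le> ?w b" using t by auto
  have W: "sets (wmeas {True, False} ?w ?M) = sets borel" "finite_measure (wmeas {True, False} ?w ?M)"
    by (simp, rule finite_measure_wmeas[OF M]) simp_all
  have "energyK c (mix_measure t P Q) = I2 (wmeas {True, False} ?w ?M) (wmeas {True, False} ?w ?M)"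
    unfolding mix_eq by (rule K_eq[OF W])
  also have "\<dots> = t * I2 P (wmeas {True, False} ?w ?M) + (1 - t) * I2 Q (wmeas {True, False} ?w ?M)"
    by (subst I2_wmeas_left[OF M _ w W]) simp_all
  also have "\<dots> = t * (t * I2 P P + (1-t) * I2 P Q) + (1 - t) * (t * I2 Q P + (1 - t) * I2 Q Q)"
    by (subst (1 2) I2_wmeas_right[OF M _ w]) (simp_all add: P Q)
  finally show ?thesis by (simp add: algebra_simps)
qed

definition T :: "'a measure \<Rightarrow> 'a measure \<Rightarrow> real" where
  "T P Q = I2 P P - I2 P Q - I2 Q P + I2 Q Q"

lemma convex_iff:
  assumes S: "\<And>R. R \<in> S \<Longrightarrow> sets R = sets borel \<and> finite_measure R"
  shows "convex_on_measures S (energyK c) \<longleftrightarrow> (\<forall>P\<in>S. \<forall>Q\<in>S. 0 \<le> T P Q)"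
proof -
  have key: "t * energyK c P + (1 - t) * energyK c Q - energyK c (mix_measure t P Q) = t * (1 - t) * T P Q"
    if "P \<in> S" "Q \<in> S" "0 \<le> t" "t \<le> 1" for P Q t
    using S[OF that(1)] S[OF that(2)] that(3,4)
    by (simp add: K_mix K_eq T_def algebra_simps)
  show ?thesis
  proof
    assume cv: "convex_on_measures S (energyK c)"
    show "\<forall>P\<in>S. \<forall>Q\<in>S. 0 \<le> T P Q"
    proof (intro ballI)
      fix P Q assume PQ: "P \<in> S" "Q \<in> S"
      have "energyK c (mix_measure (1/2) P Q) \<le> 1/2 * energyK c P + (1 - 1/2) * energyK c Q"
      proof -
        have h: "0 \<le> (1/2::real) \<and> (1/2::real) \<le> 1" by simp
        show ?thesis using cv PQ h unfolding convex_on_measures_def by blast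
      qed
      with key[OF PQ, of "1/2"] show "0 \<le> T P Q" by simp
    qed
  next
    assume H: "\<forall>P\<in>S. \<forall>Q\<in>S. 0 \<le> T P Q"
    show "convex_on_measures S (energyK c)"
      unfolding convex_on_measures_def
    proof (intro ballI allI impI)
      fix P Q and t :: real assume PQ: "P \<in> S" "Q \<in> S" and t: "0 \<le> t \<and> t \<le> 1"
      have "0 \<le> t * (1 - t) * T P Q" using H PQ t by (intro mult_nonneg_nonneg) auto
      moreover have "t * energyK c P + (1 - t) * energyK c Q - energyK c (mix_measure t P Q) = t * (1 - t) * T P Q"
        using key[OF PQ] t by blast
      ultimately show "energyK c (mix_measure t P Q) \<le> t * energyK c P + (1 - t) * energyK c Q"
        by linarith
    qed
  qed
qed

end


lemma regroup1:
  fixes zs :: "'a list" and a :: "nat \<Rightarrow> real" and F :: "'a \<Rightarrow> real"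
  shows "(\<Sum>i<length zs. F (zs!i) * a i) = (\<Sum>y\<in>set zs. F y * (\<Sum>i\<in>{i. i < length zs \<and> zs!i = y}. a i))"
proof -
  have "(\<Sum>i<length zs. F (zs!i) * a i) = (\<Sum>y\<in>set zs. \<Sum>i\<in>{i. i \<in> {..<length zs} \<and> zs!i = y}. F (zs!i) * a i)"
    by (rule sum.group[symmetric]) (auto simp: set_conv_nth)
  also have "\<dots> = (\<Sum>y\<in>set zs. F y * (\<Sum>i\<in>{i. i < length zs \<and> zs!i = y}. a i))"
  proof (rule sum.cong[OF refl])
    fix y assume "y \<in> set zs"
    have e: "{i. i \<in> {..<length zs} \<and> zs!i = y} = {i. i < length zs \<and> zs!i = y}" by auto
    show "(\<Sum>i\<in>{i. i \<in> {..<length zs} \<and> zs!i = y}. F (zs!i) * a i) = F y * (\<Sum>i\<in>{i. i < length zs \<and> zs!i = y}. a i)"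
      unfolding e sum_distrib_left by (rule sum.cong) auto
  qed
  finally show ?thesis .
qed

lemma regroup2:
  fixes zs :: "'a list" and G :: "'a \<Rightarrow> real"
  shows "(\<Sum>y\<in>set zs. G y) = (\<Sum>k<length (remdups zs). G (remdups zs ! k))"
proof -
  have "bij_betw ((!) (remdups zs)) {..<length (remdups zs)} (set zs)"
    by (rule bij_betw_nth) auto
  then show ?thesis by (rule sum.reindex_bij_betw[symmetric])
qed

lemma regroup:
  fixes zs :: "'a list" and a :: "nat \<Rightarrow> real" and F :: "'a \<Rightarrow> real"
  defines "b \<equiv> \<lambda>k. (\<Sum>i\<in>{i. i < length zs \<and> zs!i = remdups zs ! k}. a i)"
  shows "(\<Sum>i<length zs. F (zs!i) * a i) = (\<Sum>k<length (remdups zs). F (remdups zs ! k) * b k)"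
  unfolding regroup1 regroup2 b_def ..

lemma quad_regroup:
  fixes zs :: "'a list" and a :: "nat \<Rightarrow> real" and c :: "'a \<Rightarrow> 'a \<Rightarrow> real"
  defines "b \<equiv> \<lambda>k. (\<Sum>i\<in>{i. i < length zs \<and> zs!i = remdups zs ! k}. a i)"
  shows "(\<Sum>i<length zs. \<Sum>j<length zs. c (zs!i) (zs!j) * a i * a j)
       = (\<Sum>k<length (remdups zs). \<Sum>l<length (remdups zs). c (remdups zs ! k) (remdups zs ! l) * b k * b l)"
proof -
  let ?ys = "remdups zs"
  have inner: "(\<Sum>j<length zs. c x (zs!j) * a j) = (\<Sum>l<length ?ys. c x (?ys ! l) * b l)" for x
    unfolding b_def by (rule regroup)
  have "(\<Sum>i<length zs. \<Sum>j<length zs. c (zs!i) (zs!j) * a i * a j)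
      = (\<Sum>i<length zs. (\<Sum>j<length zs. c (zs!i) (zs!j) * a j) * a i)"
    by (simp add: sum_distrib_right sum_distrib_left mult_ac)
  also have "\<dots> = (\<Sum>i<length zs. (\<Sum>l<length ?ys. c (zs!i) (?ys ! l) * b l) * a i)"
    by (simp add: inner)
  also have "\<dots> = (\<Sum>k<length ?ys. (\<Sum>l<length ?ys. c (?ys!k) (?ys ! l) * b l) * b k)"
    unfolding b_def by (rule regroup)
  also have "\<dots> = (\<Sum>k<length ?ys. \<Sum>l<length ?ys. c (?ys ! k) (?ys ! l) * b k * b l)"
    by (simp add: sum_distrib_right sum_distrib_left mult_ac)
  finally show ?thesis .
qed

lemma pd_any:
  fixes c :: "'a \<Rightarrow> 'a \<Rightarrow> real"
  assumes "pos_def_kernel c"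
  shows "0 \<le> (\<Sum>i<length zs. \<Sum>j<length zs. c (zs!i) (zs!j) * a i * a j)"
  unfolding quad_regroup using assms unfolding pos_def_kernel_def by simp

lemma bpd_any:
  fixes c :: "'a \<Rightarrow> 'a \<Rightarrow> real"
  assumes "balanced_pos_def_kernel c" "(\<Sum>i<length zs. a i) = 0"
  shows "0 \<le> (\<Sum>i<length zs. \<Sum>j<length zs. c (zs!i) (zs!j) * a i * a j)"
proof -
  have "(\<Sum>k<length (remdups zs). 1 * (\<Sum>i\<in>{i. i < length zs \<and> zs!i = remdups zs ! k}. a i)) = 0"
    using regroup[of "\<lambda>_. 1" zs a] assms(2) by simp
  then show ?thesis
    unfolding quad_regroup using assms(1) unfolding balanced_pos_def_kernel_def by simp
qed



lemma PiM_pair_integral: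
  fixes M :: "'i \<Rightarrow> 'a::topological_space measure" and f :: "'a \<Rightarrow> 'a \<Rightarrow> real"
  assumes M: "\<And>i. prob_space (M i)" "\<And>i. sets (M i) = sets borel" and fin: "finite I"
    and ij: "i \<in> I" "j \<in> I" "i \<noteq> j"
    and f: "(\<lambda>(x,y). f x y) \<in> borel_measurable (borel \<Otimes>\<^sub>M borel)" and bnd: "\<And>x y. \<bar>f x y\<bar> \<le> B"
  shows "(\<integral>\<omega>. f (\<omega> i) (\<omega> j) \<partial>PiM I M) = (\<integral>z. (\<integral>y. f y z \<partial>M i) \<partial>M j)"
proof -
  interpret product_prob_space M I
    by (simp add: M(1) product_prob_space.intro product_prob_space_axioms.intro
         product_sigma_finite.intro prob_space_imp_sigma_finite)
  let ?J = "{i, j}"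
  have J: "finite ?J" "?J \<subseteq> I" using ij by auto
  have compi: "(\<lambda>x. x k) \<in> measurable (PiM ?J M) borel" if "k \<in> ?J" for k
    using measurable_component_singleton[OF that, of M] M(2)[of k] measurable_cong_sets by blast
  have gm: "(\<lambda>x. f (x i) (x j)) \<in> borel_measurable (PiM ?J M)"
  proof -
    have "(\<lambda>x. (x i, x j)) \<in> measurable (PiM ?J M) (borel \<Otimes>\<^sub>M borel)"
      by (intro measurable_Pair compi) auto
    from measurable_compose[OF this f] show ?thesis by simp
  qed
  have fJ: "finite_measure (PiM ?J M)"
    using prob_space_PiM[of ?J M] M(1) prob_space_def by blast
  have gi: "integrable (PiM ?J M) (\<lambda>x. f (x i) (x j))"
    by (rule integrable_bdd[OF fJ gm bnd])
  have "(\<integral>\<omega>. f (\<omega> i) (\<omega> j) \<partial>PiM I M) = (\<integral>\<omega>. f (restrict \<omega> ?J i) (restrict \<omega> ?J j) \<partial>PiM I M)"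
    by simp
  also have "\<dots> = (\<integral>x. f (x i) (x j) \<partial>distr (PiM I M) (PiM ?J M) (\<lambda>x. restrict x ?J))"
    by (rule integral_distr[symmetric, OF measurable_restrict_subset[OF J(2)] gm])
  also have "\<dots> = (\<integral>x. f (x i) (x j) \<partial>PiM (insert i {j}) M)"
    using distr_PiM_restrict_finite[OF J] by simp
  also have "\<dots> = (\<integral>x. (\<integral>y. f ((x(i := y)) i) ((x(i := y)) j) \<partial>M i) \<partial>PiM {j} M)"
    by (rule product_integral_insert) (use ij gi in auto)
  also have "\<dots> = (\<integral>x. (\<integral>y. f y (x j) \<partial>M i) \<partial>PiM {j} M)"
    using ij by simp
  also have "\<dots> = (\<integral>z. (\<integral>y. f y z \<partial>M i) \<partial>M j)"
  proof (rule product_integral_singleton)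
    have "(\<lambda>(z, y). f y z) \<in> borel_measurable (M j \<Otimes>\<^sub>M M i)"
    proof -
      have "(\<lambda>(z, y). f y z) \<in> borel_measurable (borel \<Otimes>\<^sub>M borel)"
        using measurable_compose[OF measurable_Pair[OF measurable_snd measurable_fst] f] by (simp add: split_beta')
      then show ?thesis using measurable_cong_sets[OF sets_pair_measure_cong[OF M(2) M(2)] refl] by blast
    qed
    then show "(\<lambda>z. \<integral>y. f y z \<partial>M i) \<in> borel_measurable (M j)"
      by (rule sigma_finite_measure.borel_measurable_lebesgue_integral[OF prob_space_imp_sigma_finite[OF M(1)]])
  qed
  finally show ?thesis .
qed

lemma PiM_diag_integral:
  fixes M :: "'i \<Rightarrow> 'a::topological_space measure" and f :: "'a \<Rightarrow> 'a \<Rightarrow> real"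
  assumes M: "\<And>i. prob_space (M i)" "\<And>i. sets (M i) = sets borel"
    and i: "i \<in> I"
    and f: "(\<lambda>(x,y). f x y) \<in> borel_measurable (borel \<Otimes>\<^sub>M borel)"
  shows "(\<integral>\<omega>. f (\<omega> i) (\<omega> i) \<partial>PiM I M) = (\<integral>x. f x x \<partial>M i)"
proof -
  have dm: "(\<lambda>x. f x x) \<in> borel_measurable (M i)"
  proof -
    have "(\<lambda>x. (x, x)) \<in> measurable borel (borel \<Otimes>\<^sub>M borel)" by (intro measurable_Pair) auto
    from measurable_compose[OF this f] have "(\<lambda>x. f x x) \<in> borel_measurable borel" by simp
    then show ?thesis using meas_borel_cong[OF M(2)] by blast
  qed
  have "(\<integral>x. f x x \<partial>M i) = (\<integral>x. f x x \<partial>distr (PiM I M) (M i) (\<lambda>\<omega>. \<omega> i))"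
    using distr_PiM_component[of I M i] M(1) i by simp
  also have "\<dots> = (\<integral>\<omega>. f (\<omega> i) (\<omega> i) \<partial>PiM I M)"
    by (rule integral_distr) (use i dm in auto)
  finally show ?thesis ..
qed

lemma sum_split_add: "(\<Sum>i<n+m. f i) = (\<Sum>i<n. f i) + (\<Sum>i<m. f (n+i)) " for f :: "nat \<Rightarrow> real"
  by (induction m) (simp_all add: add.assoc)

lemma archi_lemma:
  fixes X C :: real
  assumes "\<And>n::nat. 0 < n \<Longrightarrow> 0 \<le> real n * real n * X + real n * C"
  shows "0 \<le> X"
proof (rule ccontr)
  assume "\<not> 0 \<le> X"
  then have X: "X < 0" by simp
  obtain n :: nat where n: "\<bar>C\<bar> / (- X) < real n" using reals_Archimedean2 by blast
  have n0: "0 < n" using n X by (metis abs_ge_zero divide_nonneg_pos neg_0_less_iff_less not_less of_nat_0_less_iff of_nat_0_le_iff order_le_less_trans gr0I)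
  have nX: "0 < - X" using X by simp
  from n have "\<bar>C\<bar> < real n * (- X)" by (subst (asm) pos_divide_less_eq[OF nX])
  then have "real n * X + C < 0" by (simp add: algebra_simps)
  then have "real n * (real n * X + C) < 0" using n0 by (simp add: mult_pos_neg)
  with assms[OF n0] show False by (simp add: algebra_simps)
qed

lemma PiM_c_meas:
  fixes M :: "'i \<Rightarrow> 'a::topological_space measure" and f :: "'a \<Rightarrow> 'a \<Rightarrow> real"
  assumes M: "\<And>i. sets (M i) = sets borel" and ij: "i \<in> I" "j \<in> I"
    and f: "(\<lambda>(x,y). f x y) \<in> borel_measurable (borel \<Otimes>\<^sub>M borel)"
  shows "(\<lambda>x. f (x i) (x j)) \<in> borel_measurable (PiM I M)"
proof -
  have compi: "(\<lambda>x. x k) \<in> measurable (PiM I M) borel" if "k \<in> I" for k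
    using measurable_component_singleton[OF that, of M] M[of k] measurable_cong_sets by blast
  have "(\<lambda>x. (x i, x j)) \<in> measurable (PiM I M) (borel \<Otimes>\<^sub>M borel)"
    by (intro measurable_Pair compi ij)
  from measurable_compose[OF this f] show ?thesis by simp
qed

context kern begin

definition Dg :: "'a measure \<Rightarrow> real" where "Dg R = (\<integral>x. c x x \<partial>R)"

lemma core_n:
  assumes P: "prob_space P" "sets P = sets borel" and Q: "prob_space Q" "sets Q = sets borel" and n: "0 < n"
    and wt: "wt = (\<lambda>i. if i < n then \<alpha> else - \<beta>)"
    and H: "\<And>zs. length zs = 2*n \<Longrightarrow> 0 \<le> (\<Sum>i<2*n. \<Sum>j<2*n. c (zs!i) (zs!j) * wt i * wt j)"
  shows "0 \<le> real n * real n * (\<alpha>*\<alpha>*I2 P P - \<alpha>*\<beta>*(I2 P Q + I2 Q P) + \<beta>*\<beta>*I2 Q Q)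
              + real n * (\<alpha>*\<alpha>*(Dg P - I2 P P) + \<beta>*\<beta>*(Dg Q - I2 Q Q))"
proof -
  define M where "M = (\<lambda>i. if i < n then P else Q)"
  define I where "I = {..<2*n}"
  have Mp: "\<And>i. prob_space (M i)" and Ms: "\<And>i. sets (M i) = sets borel" and Mf: "\<And>i. finite_measure (M i)"
    using P Q by (auto simp: M_def prob_space_def)
  have fO: "finite_measure (PiM I M)"
    using prob_space_PiM[of I M] Mp prob_space_def by blast
  have intc: "integrable (PiM I M) (\<lambda>\<omega>. c (\<omega> i) (\<omega> j))" if "i \<in> I" "j \<in> I" for i j
    by (rule integrable_bdd[OF fO PiM_c_meas[OF Ms that cmeas] cbnd])
  have E: "(\<integral>\<omega>. c (\<omega> i) (\<omega> j) \<partial>PiM I M) = I2 (M j) (M i) + (if i = j then Dg (M i) - I2 (M i) (M i) else 0)"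
    if "i \<in> I" "j \<in> I" for i j
  proof (cases "i = j")
    case True
    then show ?thesis using PiM_diag_integral[OF Mp Ms that(1) cmeas] by (simp add: Dg_def)
  next
    case False
    have "(\<integral>\<omega>. c (\<omega> i) (\<omega> j) \<partial>PiM I M) = (\<integral>z. (\<integral>y. c y z \<partial>M i) \<partial>M j)"
      by (rule PiM_pair_integral[OF Mp Ms _ that False cmeas cbnd]) (simp add: I_def)
    also have "\<dots> = I2 (M j) (M i)" unfolding I2_def by (simp add: csym)
    finally show ?thesis using False by simp
  qed
  have "0 \<le> (\<integral>\<omega>. (\<Sum>i\<in>I. \<Sum>j\<in>I. c (\<omega> i) (\<omega> j) * wt i * wt j) \<partial>PiM I M)"
  proof (rule Bochner_Integration.integral_nonneg)
    fix \<omega> assume "\<omega> \<in> space (PiM I M)"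
    have "0 \<le> (\<Sum>i<2*n. \<Sum>j<2*n. c (map \<omega> [0..<2*n] ! i) (map \<omega> [0..<2*n] ! j) * wt i * wt j)"
      by (rule H) simp
    also have "\<dots> = (\<Sum>i\<in>I. \<Sum>j\<in>I. c (\<omega> i) (\<omega> j) * wt i * wt j)"
      unfolding I_def by (intro sum.cong refl) simp
    finally show "0 \<le> (\<Sum>i\<in>I. \<Sum>j\<in>I. c (\<omega> i) (\<omega> j) * wt i * wt j)" .
  qed
  also have "\<dots> = (\<Sum>i\<in>I. \<Sum>j\<in>I. wt i * wt j * (\<integral>\<omega>. c (\<omega> i) (\<omega> j) \<partial>PiM I M))"
  proof -
    have "(\<integral>\<omega>. (\<Sum>i\<in>I. \<Sum>j\<in>I. c (\<omega> i) (\<omega> j) * wt i * wt j) \<partial>PiM I M)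
        = (\<Sum>i\<in>I. (\<integral>\<omega>. (\<Sum>j\<in>I. c (\<omega> i) (\<omega> j) * wt i * wt j) \<partial>PiM I M))"
      by (rule Bochner_Integration.integral_sum) (intro Bochner_Integration.integrable_sum Bochner_Integration.integrable_mult_left intc; simp)
    also have "\<dots> = (\<Sum>i\<in>I. \<Sum>j\<in>I. (\<integral>\<omega>. c (\<omega> i) (\<omega> j) * wt i * wt j \<partial>PiM I M))"
      by (intro sum.cong refl Bochner_Integration.integral_sum) (intro Bochner_Integration.integrable_mult_left intc; simp)
    also have "\<dots> = (\<Sum>i\<in>I. \<Sum>j\<in>I. wt i * wt j * (\<integral>\<omega>. c (\<omega> i) (\<omega> j) \<partial>PiM I M))"
      by (simp add: mult_ac)
    finally show ?thesis .
  qed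
  also have "\<dots> = (\<Sum>i\<in>I. \<Sum>j\<in>I. wt i * wt j * I2 (M j) (M i)) + (\<Sum>i\<in>I. wt i * wt i * (Dg (M i) - I2 (M i) (M i)))"
  proof -
    have "(\<Sum>i\<in>I. \<Sum>j\<in>I. wt i * wt j * (\<integral>\<omega>. c (\<omega> i) (\<omega> j) \<partial>PiM I M))
        = (\<Sum>i\<in>I. \<Sum>j\<in>I. wt i * wt j * I2 (M j) (M i) + (if i = j then wt i * wt i * (Dg (M i) - I2 (M i) (M i)) else 0))"
      by (intro sum.cong refl) (simp add: E distrib_left)
    also have "\<dots> = (\<Sum>i\<in>I. (\<Sum>j\<in>I. wt i * wt j * I2 (M j) (M i)) + wt i * wt i * (Dg (M i) - I2 (M i) (M i)))"
      by (intro sum.cong refl) (simp add: sum.distrib I_def)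
    finally show ?thesis by (simp add: sum.distrib)
  qed
  also have "\<dots> = real n * real n * (\<alpha>*\<alpha>*I2 P P - \<alpha>*\<beta>*(I2 P Q + I2 Q P) + \<beta>*\<beta>*I2 Q Q)
              + real n * (\<alpha>*\<alpha>*(Dg P - I2 P P) + \<beta>*\<beta>*(Dg Q - I2 Q Q))"
    unfolding I_def mult_2 sum_split_add by (simp add: wt M_def algebra_simps)
  finally show ?thesis .
qed

end



context kern begin

lemma core:
  assumes P: "prob_space P" "sets P = sets borel" and Q: "prob_space Q" "sets Q = sets borel"
    and H: "\<And>n zs. 0 < n \<Longrightarrow> length zs = 2*n \<Longrightarrow>
       0 \<le> (\<Sum>i<2*n. \<Sum>j<2*n. c (zs!i) (zs!j) * (if i < n then \<alpha> else - \<beta>) * (if j < n then \<alpha> else - \<beta>))"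
  shows "0 \<le> \<alpha>*\<alpha>*I2 P P - \<alpha>*\<beta>*(I2 P Q + I2 Q P) + \<beta>*\<beta>*I2 Q Q"
proof (rule archi_lemma)
  fix n :: nat assume n: "0 < n"
  show "0 \<le> real n * real n * (\<alpha>*\<alpha>*I2 P P - \<alpha>*\<beta>*(I2 P Q + I2 Q P) + \<beta>*\<beta>*I2 Q Q)
              + real n * (\<alpha>*\<alpha>*(Dg P - I2 P P) + \<beta>*\<beta>*(Dg Q - I2 Q Q))"
    by (rule core_n[OF P Q n refl]) (rule H[OF n])
qed

lemma null_integral:
  assumes "emeasure P (space P) = 0"
  shows "integral\<^sup>L P f = 0"
proof -
  have "P = null_measure P"
  proof (rule measure_eqI)
    fix A assume A: "A \<in> sets P"
    have "emeasure P A \<le> emeasure P (space P)" by (rule emeasure_space)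
    then show "emeasure P A = emeasure (null_measure P) A" using assms by simp
  qed simp
  then have "integral\<^sup>L P f = integral\<^sup>L (null_measure P) f" by simp
  then show ?thesis by simp
qed

lemma normalize:
  assumes P: "sets P = sets borel" "finite_measure P"
  shows "\<exists>P' p. prob_space P' \<and> sets P' = sets borel \<and> 0 \<le> p \<and>
     (\<forall>S::'a measure. sets S = sets borel \<and> finite_measure S \<longrightarrow> I2 P S = p * I2 P' S \<and> I2 S P = p * I2 S P')"
proof (cases "measure P UNIV = 0")
  case True
  have sp: "space P = UNIV" using sets_eq_imp_space_eq[OF P(1)] by simp
  have e0: "emeasure P (space P) = 0"
    using True sp finite_measure.emeasure_eq_measure[OF P(2)] by simp
  define x0 :: 'a where "x0 = undefined"
  have "prob_space (return borel x0)" by (rule prob_space_return) simp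
  moreover have "sets (return borel x0) = sets borel" by simp
  moreover have "\<forall>S::'a measure. sets S = sets borel \<and> finite_measure S \<longrightarrow> I2 P S = 0 * I2 (return borel x0) S \<and> I2 S P = 0 * I2 S (return borel x0)"
    unfolding I2_def null_integral[OF e0] by simp
  ultimately show ?thesis by (intro exI[of _ "return borel x0"] exI[of _ 0]) auto
next
  case False
  let ?p = "measure P UNIV"
  have p0: "0 < ?p" using False by (simp add: zero_less_measure_iff)
  let ?P' = "wmeas {()} (\<lambda>_. 1 / ?p) (\<lambda>_. P)"
  have M: "\<And>i. i \<in> {()} \<Longrightarrow> sets P = sets borel" "\<And>i. i \<in> {()} \<Longrightarrow> finite_measure P" using P by auto
  have w: "\<And>i. i \<in> {()} \<Longrightarrow> 0 \<le> 1 / ?p" using p0 by simp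
  have sp: "space P = UNIV" using sets_eq_imp_space_eq[OF P(1)] by simp
  have "prob_space ?P'"
  proof (rule prob_spaceI)
    have "emeasure ?P' (space ?P') = ennreal (1 / ?p) * emeasure P UNIV"
      using P by (simp add: emeasure_wmeas)
    also have "\<dots> = ennreal (1 / ?p) * ennreal ?p"
      using finite_measure.emeasure_eq_measure[OF P(2)] sp by simp
    also have "\<dots> = ennreal (1 / ?p * ?p)" by (rule ennreal_mult[symmetric]) (use p0 in auto)
    also have "\<dots> = 1" using p0 by simp
    finally show "emeasure ?P' (space ?P') = 1" .
  qed
  moreover have "sets ?P' = sets borel" by simp
  moreover have FP': "finite_measure ?P'" by (rule finite_measure_wmeas) (use P in auto)
  have "\<forall>S::'a measure. sets S = sets borel \<and> finite_measure S \<longrightarrow> I2 P S = ?p * I2 ?P' S \<and> I2 S P = ?p * I2 S ?P'"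
  proof (intro allI impI)
    fix S :: "'a measure" assume S: "sets S = sets borel \<and> finite_measure S"
    have "I2 ?P' S = (\<Sum>i\<in>{()}. 1 / ?p * I2 P S)"
      by (rule I2_wmeas_left) (use P S p0 in auto)
    moreover have "I2 S ?P' = (\<Sum>i\<in>{()}. 1 / ?p * I2 S P)"
      by (rule I2_wmeas_right) (use P S p0 in auto)
    ultimately show "I2 P S = ?p * I2 ?P' S \<and> I2 S P = ?p * I2 S ?P'" using p0 by simp
  qed
  ultimately show ?thesis using p0 by (intro exI[of _ ?P'] exI[of _ ?p]) auto
qed

end



context kern begin

lemma pd_T:
  assumes pd: "pos_def_kernel c" and P: "sets P = sets borel" "finite_measure P"
    and Q: "sets Q = sets borel" "finite_measure Q"
  shows "0 \<le> T P Q"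
proof -
  obtain P' p where P': "prob_space P'" "sets P' = sets borel" "0 \<le> p"
    and hP: "\<And>S. sets S = sets borel \<Longrightarrow> finite_measure S \<Longrightarrow> I2 P S = p * I2 P' S \<and> I2 S P = p * I2 S P'"
    using normalize[OF P] by blast
  obtain Q' q where Q': "prob_space Q'" "sets Q' = sets borel" "0 \<le> q"
    and hQ: "\<And>S. sets S = sets borel \<Longrightarrow> finite_measure S \<Longrightarrow> I2 Q S = q * I2 Q' S \<and> I2 S Q = q * I2 S Q'"
    using normalize[OF Q] by blast
  have fP': "finite_measure P'" and fQ': "finite_measure Q'" using P' Q' by (auto simp: prob_space_def)
  have e1: "I2 P P = p * (p * I2 P' P')" using hP[OF P] hP[OF P'(2) fP'] by simp
  have e2: "I2 P Q = p * (q * I2 P' Q')" using hP[OF Q] hQ[OF P'(2) fP'] by simp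
  have e3: "I2 Q P = q * (p * I2 Q' P')" using hQ[OF P] hP[OF Q'(2) fQ'] by simp
  have e4: "I2 Q Q = q * (q * I2 Q' Q')" using hQ[OF Q] hQ[OF Q'(2) fQ'] by simp
  have "0 \<le> p*p*I2 P' P' - p*q*(I2 P' Q' + I2 Q' P') + q*q*I2 Q' Q'"
  proof (rule core[OF P'(1,2) Q'(1,2)])
    fix n :: nat and zs :: "'a list" assume "0 < n" "length zs = 2*n"
    then show "0 \<le> (\<Sum>i<2*n. \<Sum>j<2*n. c (zs!i) (zs!j) * (if i < n then p else - q) * (if j < n then p else - q))"
      using pd_any[OF pd, where zs=zs and a="\<lambda>i. if i < n then p else - q"] by simp
  qed
  then show ?thesis unfolding T_def e1 e2 e3 e4 by (simp add: algebra_simps)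
qed

lemma bpd_T:
  assumes pd: "balanced_pos_def_kernel c" and P: "sets P = sets borel" "prob_space P"
    and Q: "sets Q = sets borel" "prob_space Q"
  shows "0 \<le> T P Q"
proof -
  have "0 \<le> 1*1*I2 P P - 1*1*(I2 P Q + I2 Q P) + 1*1*I2 Q Q"
  proof (rule core[OF P(2,1) Q(2,1)])
    fix n :: nat and zs :: "'a list" assume "0 < n" "length zs = 2*n"
    moreover have "(\<Sum>i<length zs. (if i < n then 1 else - 1::real)) = 0"
      using \<open>length zs = 2*n\<close> by (simp add: mult_2 sum_split_add)
    ultimately show "0 \<le> (\<Sum>i<2*n. \<Sum>j<2*n. c (zs!i) (zs!j) * (if i < n then 1 else - 1) * (if j < n then 1 else - 1))"
      using bpd_any[OF pd, where zs=zs and a="\<lambda>i. if i < n then 1 else - 1"] by simp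
  qed
  then show ?thesis unfolding T_def by (simp add: algebra_simps)
qed

lemma ret_fin: "finite_measure (return borel x)"
  using prob_space_return[of x borel] unfolding prob_space_def by simp

definition Dm :: "'a list \<Rightarrow> (nat \<Rightarrow> real) \<Rightarrow> 'a measure" where
  "Dm xs w = wmeas {..<length xs} w (\<lambda>i. return borel (xs!i))"

lemma Dm_sets: "sets (Dm xs w) = sets borel" by (simp add: Dm_def)

lemma Dm_finite: "finite_measure (Dm xs w)"
  unfolding Dm_def by (rule finite_measure_wmeas) (auto intro: ret_fin)

lemma I2_return: "I2 (return borel x) (return borel y) = c x y"
proof -
  have "(\<lambda>x. \<integral>y'. c x y' \<partial>return borel y) = (\<lambda>x. c x y)"
    by (rule ext, rule integral_return) (simp_all add: c_meas2)
  moreover have "(\<lambda>x. c x y) \<in> borel_measurable borel"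
    using c_meas2[of y] by (subst csym) simp
  ultimately show ?thesis unfolding I2_def by (simp add: integral_return)
qed

lemma I2_Dm:
  assumes p: "\<And>i. 0 \<le> p i" and q: "\<And>i. 0 \<le> q i"
  shows "I2 (Dm xs p) (Dm xs q) = (\<Sum>i<length xs. \<Sum>j<length xs. p i * q j * c (xs!i) (xs!j))"
proof -
  have rs: "\<And>i. sets (return borel (xs!i)) = sets borel" by simp
  have rf: "\<And>i. finite_measure (return borel (xs!i))" by (rule ret_fin)
  have "I2 (Dm xs p) (Dm xs q) = (\<Sum>i<length xs. p i * I2 (return borel (xs!i)) (Dm xs q))"
    unfolding Dm_def[of xs p] by (rule I2_wmeas_left) (simp_all add: rs rf p Dm_sets Dm_finite)
  also have "\<dots> = (\<Sum>i<length xs. p i * (\<Sum>j<length xs. q j * I2 (return borel (xs!i)) (return borel (xs!j))))"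
    unfolding Dm_def[of xs q] by (subst I2_wmeas_right) (simp_all add: rs rf q)
  also have "\<dots> = (\<Sum>i<length xs. \<Sum>j<length xs. p i * q j * c (xs!i) (xs!j))"
    by (simp add: I2_return sum_distrib_left mult_ac)
  finally show ?thesis .
qed

lemma T_Dm:
  assumes p: "\<And>i. 0 \<le> p i" and q: "\<And>i. 0 \<le> q i"
  shows "T (Dm xs p) (Dm xs q) = (\<Sum>i<length xs. \<Sum>j<length xs. c (xs!i) (xs!j) * (p i - q i) * (p j - q j))"
  unfolding T_def using p q
  by (simp add: I2_Dm sum_subtractf[symmetric] sum.distrib[symmetric] algebra_simps)

lemma T_pd:
  assumes H: "\<forall>P\<in>finite_borel_measures. \<forall>Q\<in>finite_borel_measures. 0 \<le> T P Q"
  shows "pos_def_kernel c"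
  unfolding pos_def_kernel_def
proof (intro allI impI)
  fix xs :: "'a list" and a :: "nat \<Rightarrow> real"
  let ?p = "\<lambda>i. max (a i) 0" and ?q = "\<lambda>i. max (- a i) 0"
  have mem: "Dm xs w \<in> finite_borel_measures" for w
    unfolding finite_borel_measures_def using Dm_sets Dm_finite by auto
  have "0 \<le> T (Dm xs ?p) (Dm xs ?q)" using H mem by blast
  also have "T (Dm xs ?p) (Dm xs ?q) = (\<Sum>i<length xs. \<Sum>j<length xs. c (xs!i) (xs!j) * a i * a j)"
  proof -
    have "\<And>i. ?p i - ?q i = a i" by (auto simp: max_def)
    then show ?thesis by (subst T_Dm) simp_all
  qed
  finally show "0 \<le> (\<Sum>i<length xs. \<Sum>j<length xs. c (xs!i) (xs!j) * a i * a j)" .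
qed

lemma T_bpd:
  assumes H: "\<forall>P\<in>borel_prob_measures. \<forall>Q\<in>borel_prob_measures. 0 \<le> T P Q"
  shows "balanced_pos_def_kernel c"
  unfolding balanced_pos_def_kernel_def
proof (intro allI impI)
  fix xs :: "'a list" and a :: "nat \<Rightarrow> real"
  assume sa: "(\<Sum>i<length xs. a i) = 0"
  let ?n = "length xs"
  let ?p = "\<lambda>i. max (a i) 0" and ?q = "\<lambda>i. max (- a i) 0"
  have pq: "\<And>i. ?p i - ?q i = a i" by (auto simp: max_def)
  let ?s = "\<Sum>i<?n. ?p i"
  have s0: "0 \<le> ?s" by (intro sum_nonneg) simp
  have sq: "(\<Sum>i<?n. ?q i) = ?s"
  proof -
    have "(\<Sum>i<?n. ?q i) = (\<Sum>i<?n. ?p i - a i)" using pq by (intro sum.cong) (auto simp: max_def)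
    also have "\<dots> = ?s" using sa by (simp add: sum_subtractf)
    finally show ?thesis .
  qed
  show "0 \<le> (\<Sum>i<?n. \<Sum>j<?n. c (xs!i) (xs!j) * a i * a j)"
  proof (cases "?s = 0")
    case True
    have "\<forall>i\<in>{..<?n}. ?p i = 0" using True sum_nonneg_eq_0_iff[of "{..<?n}" ?p] by simp
    moreover have "\<forall>i\<in>{..<?n}. ?q i = 0" using True sq sum_nonneg_eq_0_iff[of "{..<?n}" ?q] by simp
    ultimately have "\<forall>i\<in>{..<?n}. a i = 0" using pq by (metis diff_zero)
    then show ?thesis by simp
  next
    case False
    then have spos: "0 < ?s" using s0 by simp
    let ?p' = "\<lambda>i. ?p i / ?s" and ?q' = "\<lambda>i. ?q i / ?s"
    have prob: "prob_space (Dm xs w)" if w: "\<And>i. 0 \<le> w i" "(\<Sum>i<?n. w i) = 1" for w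
    proof (rule prob_spaceI)
      have "emeasure (Dm xs w) (space (Dm xs w)) = (\<Sum>i<?n. ennreal (w i) * emeasure (return borel (xs!i)) UNIV)"
        unfolding Dm_def by (subst emeasure_wmeas) simp_all
      also have "\<dots> = (\<Sum>i<?n. ennreal (w i))" by simp
      also have "\<dots> = ennreal (\<Sum>i<?n. w i)" using w(1) by (intro sum_ennreal) simp
      finally show "emeasure (Dm xs w) (space (Dm xs w)) = 1" using w(2) by simp
    qed
    have mem: "Dm xs ?p' \<in> borel_prob_measures" "Dm xs ?q' \<in> borel_prob_measures"
      unfolding borel_prob_measures_def using Dm_sets spos sq
      by (auto intro!: prob simp: sum_divide_distrib[symmetric])
    have "0 \<le> T (Dm xs ?p') (Dm xs ?q')" using H mem by blast
    also have "T (Dm xs ?p') (Dm xs ?q') = (\<Sum>i<?n. \<Sum>j<?n. c (xs!i) (xs!j) * (a i / ?s) * (a j / ?s))"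
    proof -
      have "\<And>i. ?p' i - ?q' i = a i / ?s" using pq by (simp add: diff_divide_distrib[symmetric])
      then show ?thesis using spos by (subst T_Dm) simp_all
    qed
    also have "\<dots> = (\<Sum>i<?n. \<Sum>j<?n. c (xs!i) (xs!j) * a i * a j) / (?s * ?s)"
      by (simp add: sum_divide_distrib)
    finally have "0 \<le> (\<Sum>i<?n. \<Sum>j<?n. c (xs!i) (xs!j) * a i * a j) / (?s * ?s)" .
    moreover have "0 < ?s * ?s" using spos by simp
    ultimately show ?thesis by (simp add: zero_le_divide_iff)
  qed
qed

end



theorem lemma3p3:
  fixes c :: "'a::polish_space \<Rightarrow> 'a \<Rightarrow> real"
  assumes cont: "continuous_on UNIV (\<lambda>(x, y). c x y)"
    and bdd: "bounded (range (\<lambda>(x, y). c x y))"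
    and nonneg: "\<And>x y. 0 \<le> c x y"
    and sym: "\<And>x y. c x y = c y x"
  shows "(pos_def_kernel c \<longleftrightarrow> convex_on_measures finite_borel_measures (energyK c))
    \<and> (balanced_pos_def_kernel c \<longleftrightarrow> convex_on_measures borel_prob_measures (energyK c))"
proof -
  obtain B where B: "\<And>z. z \<in> range (\<lambda>(x, y). c x y) \<Longrightarrow> norm z \<le> B"
    using bdd unfolding bounded_iff by blast
  have cb: "\<And>x y. \<bar>c x y\<bar> \<le> B" using B[of "c _ _"] by (metis (mono_tags) case_prod_conv rangeI real_norm_def)
  have cm: "(\<lambda>(x, y). c x y) \<in> borel_measurable (borel \<Otimes>\<^sub>M borel)"
    unfolding borel_prod by (rule borel_measurable_continuous_onI[OF cont])
  interpret kern c B by standard (use cm cb sym in auto)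
  have fb: "\<And>R. R \<in> finite_borel_measures \<Longrightarrow> sets R = sets borel \<and> finite_measure R"
    unfolding finite_borel_measures_def by simp
  have pb: "\<And>R. R \<in> borel_prob_measures \<Longrightarrow> sets R = sets borel \<and> finite_measure R"
    unfolding borel_prob_measures_def prob_space_def by simp
  have A: "pos_def_kernel c \<longleftrightarrow> (\<forall>P\<in>finite_borel_measures. \<forall>Q\<in>finite_borel_measures. 0 \<le> T P Q)"
  proof
    assume pd: "pos_def_kernel c"
    show "\<forall>P\<in>finite_borel_measures. \<forall>Q\<in>finite_borel_measures. 0 \<le> T P Q"
      using fb pd_T[OF pd] by blast
  next
    assume "\<forall>P\<in>finite_borel_measures. \<forall>Q\<in>finite_borel_measures. 0 \<le> T P Q"
    then show "pos_def_kernel c" by (rule T_pd)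
  qed
  have i: "pos_def_kernel c \<longleftrightarrow> convex_on_measures finite_borel_measures (energyK c)"
    using A convex_iff[OF fb] by simp
  have A2: "balanced_pos_def_kernel c \<longleftrightarrow> (\<forall>P\<in>borel_prob_measures. \<forall>Q\<in>borel_prob_measures. 0 \<le> T P Q)"
  proof
    assume pd: "balanced_pos_def_kernel c"
    show "\<forall>P\<in>borel_prob_measures. \<forall>Q\<in>borel_prob_measures. 0 \<le> T P Q"
      using bpd_T[OF pd] unfolding borel_prob_measures_def by blast
  next
    assume "\<forall>P\<in>borel_prob_measures. \<forall>Q\<in>borel_prob_measures. 0 \<le> T P Q"
    then show "balanced_pos_def_kernel c" by (rule T_bpd)
  qed
  have ii: "balanced_pos_def_kernel c \<longleftrightarrow> convex_on_measures borel_prob_measures (energyK c)"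
    using A2 convex_iff[OF pb] by simp
  from i ii show ?thesis ..
qed


end
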